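(* Let $N\ge1$, $V=\{1,\dots,N\}$, $A$ an $N\times N$ row-stochastic matrix, and $\sigma_1,\sigma_2,\dots$ random variables with values in $2^V$. Consider $x(k+1)=A_{\sigma_k}x(k)$, $k\ge1$, with deterministic $x(1)\in\mathbb R^N$. Then the iteration reaches consensus almost surely if and only if $\lim_{k\to\infty}\mathbb P\big(\lambda(A_{\sigma_k}A_{\sigma_{k-1}}\cdots A_{\sigma_1})\ge\varepsilon\big)=0$ for every $\varepsilon>0$.
   Context: For $\sigma\subseteq V$, $A_\sigma$ is the matrix whose $j$-th row equals the $j$-th row of $A$ if $j\in\sigma$ and equals $e_j^T$ otherwise. For a row-stochastic matrix $B=(b_{ij})$, the ergodic coefficient is $\lambda(B)=1-\min_{i\neq j}\sum_{k=1}^N\min(b_{ik},b_{jk})$. The iteration reaches consensus almost surely if for every $\varepsilon>0$ and every $x(1)\in\mathbb R^N$, $\lim_{k\to\infty}\mathbb P\big(\sum_{j=1}^N (x_j(k)-\frac1N\sum_{i=1}^N x_i(k))^2\ge\varepsilon\big)=0$. *)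

theory Defs
  imports "HOL-Probability.Probability"
begin

text \<open>Row-stochastic matrix (index set V modelled by the finite type 'n, N = CARD('n)).\<close>
definition row_stochastic :: "real^'n^'n \<Rightarrow> bool" where
  "row_stochastic A \<longleftrightarrow> (\<forall>i j. A $ i $ j \<ge> 0) \<and> (\<forall>i. (\<Sum>j\<in>UNIV. A $ i $ j) = 1)"

definition A_sub :: "real^'n^'n \<Rightarrow> 'n set \<Rightarrow> real^'n^'n" where
  "A_sub A s = (\<chi> j k. if j \<in> s then A $ j $ k else (if k = j then 1 else 0))"

text \<open>Ergodic coefficient. For N = 1 there are no pairs i \<noteq> j; we use the convention 0.\<close>
definition ergcoef :: "real^'n^'n \<Rightarrow> real" where
  "ergcoef B = (if CARD('n) = 1 then 0 else
     1 - Min {(\<Sum>k\<in>UNIV. min (B $ i $ k) (B $ j $ k)) | i j. i \<noteq> j})"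

fun prodA :: "real^'n^'n \<Rightarrow> (nat \<Rightarrow> 'a \<Rightarrow> 'n set) \<Rightarrow> nat \<Rightarrow> 'a \<Rightarrow> real^'n^'n" where
  "prodA A \<sigma> 0 w = mat 1"
| "prodA A \<sigma> (Suc k) w = A_sub A (\<sigma> (Suc k) w) ** prodA A \<sigma> k w"

text \<open>Trajectory: traj k = x(k) for k \<ge> 1, x(1) = x1, x(k+1) = A_{sigma_k} x(k).
  (traj 0 is set to x1 as a dummy value.)\<close>
fun traj :: "real^'n^'n \<Rightarrow> (nat \<Rightarrow> 'a \<Rightarrow> 'n set) \<Rightarrow> real^'n \<Rightarrow> nat \<Rightarrow> 'a \<Rightarrow> real^'n" where
  "traj A \<sigma> x1 0 w = x1"
| "traj A \<sigma> x1 (Suc 0) w = x1"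
| "traj A \<sigma> x1 (Suc (Suc k)) w = A_sub A (\<sigma> (Suc k) w) *v traj A \<sigma> x1 (Suc k) w"

definition disagreement :: "real^'n \<Rightarrow> real" where
  "disagreement x = (\<Sum>j\<in>UNIV. (x $ j - (\<Sum>i\<in>UNIV. x $ i) / real CARD('n))\<^sup>2)"

text \<open>Consensus "almost surely" as defined in the paper (i.e. in probability).\<close>
definition reaches_consensus :: "'a measure \<Rightarrow> real^'n^'n \<Rightarrow> (nat \<Rightarrow> 'a \<Rightarrow> 'n set) \<Rightarrow> bool" where
  "reaches_consensus M A \<sigma> \<longleftrightarrow>
     (\<forall>\<epsilon>>0. \<forall>x1. (\<lambda>k. measure M {w \<in> space M. disagreement (traj A \<sigma> x1 k w) \<ge> \<epsilon>})
                     \<longlonglongrightarrow> 0)"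

end

theory Submission
  imports Defs
begin

lemma rs_mult:
  assumes "row_stochastic A" "row_stochastic B"
  shows "row_stochastic (A ** B)"
proof -
  have nn: "\<forall>i j. A $ i $ j \<ge> 0" "\<forall>i j. B $ i $ j \<ge> 0"
    and s: "\<And>i. (\<Sum>j\<in>UNIV. A $ i $ j) = 1" "\<And>i. (\<Sum>j\<in>UNIV. B $ i $ j) = 1"
    using assms by (auto simp: row_stochastic_def)
  have "(\<Sum>j\<in>UNIV. (A ** B) $ i $ j) = 1" for i
  proof -
    have "(\<Sum>j\<in>UNIV. (A ** B) $ i $ j) = (\<Sum>j\<in>UNIV. \<Sum>k\<in>UNIV. A $ i $ k * B $ k $ j)"
      by (simp add: matrix_matrix_mult_def)
    also have "\<dots> = (\<Sum>k\<in>UNIV. A $ i $ k * (\<Sum>j\<in>UNIV. B $ k $ j))"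
      by (subst sum.swap) (simp add: sum_distrib_left)
    also have "\<dots> = 1" using s by simp
    finally show ?thesis .
  qed
  moreover have "(A ** B) $ i $ j \<ge> 0" for i j
    using nn by (simp add: matrix_matrix_mult_def sum_nonneg)
  ultimately show ?thesis by (simp add: row_stochastic_def)
qed

lemma rs_sub:
  assumes "row_stochastic A"
  shows "row_stochastic (A_sub A s)"
proof -
  have "(\<Sum>k\<in>UNIV. A_sub A s $ j $ k) = 1" for j
  proof (cases "j \<in> s")
    case True
    then show ?thesis using assms by (simp add: A_sub_def row_stochastic_def)
  next
    case False
    then have "(\<Sum>k\<in>UNIV. A_sub A s $ j $ k) = (\<Sum>k\<in>UNIV. if k = j then 1 else 0)"
      by (simp add: A_sub_def)
    also have "\<dots> = 1" by simp
    finally show ?thesis .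
  qed
  moreover have "A_sub A s $ j $ k \<ge> 0" for j k
    using assms by (simp add: A_sub_def row_stochastic_def)
  ultimately show ?thesis by (simp add: row_stochastic_def)
qed

lemma rs_prodA:
  assumes "row_stochastic A"
  shows "row_stochastic (prodA A \<sigma> k w)"
proof (induction k)
  case 0
  show ?case by (simp add: row_stochastic_def mat_def sum.delta)
next
  case (Suc k)
  then show ?case by (simp add: rs_mult rs_sub assms)
qed

lemma traj_prodA: "traj A \<sigma> x1 (Suc k) w = prodA A \<sigma> k w *v x1"
  by (induction k) (simp_all add: matrix_vector_mul_assoc)


lemma meas_comb:
  fixes s :: "'a \<Rightarrow> 'b::finite"
  assumes "s \<in> measurable M (count_space UNIV)" "P \<in> measurable M (count_space UNIV)"
  shows "(\<lambda>w. G (s w) (P w)) \<in> measurable M (count_space UNIV)"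
proof (rule measurableI)
  fix B
  have "(\<lambda>w. G (s w) (P w)) -` B \<inter> space M =
        (\<Union>a. (s -` {a} \<inter> space M) \<inter> (P -` {p. G a p \<in> B} \<inter> space M))" by auto
  also have "\<dots> \<in> sets M"
    by (intro sets.finite_UN sets.Int measurable_sets[OF assms(1)] measurable_sets[OF assms(2)]) auto
  finally show "(\<lambda>w. G (s w) (P w)) -` B \<inter> space M \<in> sets M" .
qed simp

lemma meas_prodA:
  assumes "\<And>k. k \<ge> 1 \<Longrightarrow> \<sigma> k \<in> measurable M (count_space UNIV)"
  shows "(\<lambda>w. prodA A \<sigma> k w) \<in> measurable M (count_space UNIV)"
proof (induction k)
  case 0
  then show ?case by simp
next
  case (Suc k)
  have "\<sigma> (Suc k) \<in> measurable M (count_space UNIV)" using assms by simp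
  from meas_comb[OF this Suc, of "\<lambda>s P. A_sub A s ** P"] show ?case by simp
qed

lemma sets_prodA:
  assumes "\<And>k. k \<ge> 1 \<Longrightarrow> \<sigma> k \<in> measurable M (count_space UNIV)"
  shows "{w \<in> space M. \<Phi> (prodA A \<sigma> k w)} \<in> sets M"
proof -
  have "{w \<in> space M. \<Phi> (prodA A \<sigma> k w)} = (\<lambda>w. prodA A \<sigma> k w) -` {P. \<Phi> P} \<inter> space M"
    by auto
  also have "\<dots> \<in> sets M" using meas_prodA[OF assms] by (rule measurable_sets) auto
  finally show ?thesis .
qed

lemma two_elems:
  assumes "CARD('n) \<noteq> 1"
  obtains i j :: 'n where "i \<noteq> j"
proof -
  obtain i :: 'n where True by simp
  have "\<exists>j::'n. j \<noteq> i"
  proof (rule ccontr)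
    assume "\<not> ?thesis"
    then have "(UNIV::'n set) = {i}" by auto
    then show False using assms card_1_singleton_iff by (metis One_nat_def)
  qed
  then show ?thesis using that by blast
qed

lemma erg_finite:
  "finite {(\<Sum>k\<in>UNIV. min (B $ i $ k) (B $ j $ k)) | i j :: 'n::finite. i \<noteq> j}"
  by (rule finite_subset[of _ "(\<lambda>(i,j). (\<Sum>k\<in>UNIV. min (B $ i $ k) (B $ j $ k))) ` UNIV"]) auto

lemma erg_ge:
  fixes P :: "real^'n^'n"
  assumes "i \<noteq> j"
  shows "1 - (\<Sum>k\<in>UNIV. min (P $ i $ k) (P $ j $ k)) \<le> ergcoef P"
proof -
  have "CARD('n) \<noteq> 1"
  proof
    assume "CARD('n) = 1"
    then obtain a :: 'n where "(UNIV::'n set) = {a}" using card_1_singletonE by blast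
    then show False using assms by (metis UNIV_I singletonD)
  qed
  moreover have "Min {(\<Sum>k\<in>UNIV. min (P $ i $ k) (P $ j $ k)) | i j :: 'n::finite. i \<noteq> j}
      \<le> (\<Sum>k\<in>UNIV. min (P $ i $ k) (P $ j $ k))"
    using assms by (intro Min_le erg_finite) auto
  ultimately show ?thesis by (simp add: ergcoef_def)
qed

lemma erg_nonneg:
  fixes P :: "real^'n^'n"
  assumes "row_stochastic P"
  shows "0 \<le> ergcoef P"
proof (cases "CARD('n) = 1")
  case True
  then show ?thesis by (simp add: ergcoef_def)
next
  case False
  then obtain i j :: 'n where ij: "i \<noteq> j" using two_elems by blast
  have "(\<Sum>k\<in>UNIV. min (P $ i $ k) (P $ j $ k)) \<le> (\<Sum>k\<in>UNIV. P $ i $ k)"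
    by (intro sum_mono) simp
  also have "\<dots> = 1" using assms by (simp add: row_stochastic_def)
  finally show ?thesis using erg_ge[OF ij, of P] by simp
qed

lemma contract_key:
  fixes P :: "real^'n^'n"
  assumes "row_stochastic P" "\<forall>k. lo \<le> x $ k \<and> x $ k \<le> hi"
  shows "(P *v x) $ i - (P *v x) $ j \<le> (1 - (\<Sum>k\<in>UNIV. min (P $ i $ k) (P $ j $ k))) * (hi - lo)"
proof -
  define m where "m k = min (P $ i $ k) (P $ j $ k)" for k
  have si: "(\<Sum>k\<in>UNIV. P $ i $ k) = 1" and sj: "(\<Sum>k\<in>UNIV. P $ j $ k) = 1"
    using assms(1) by (auto simp: row_stochastic_def)
  have "(P *v x) $ i - (P *v x) $ j = (\<Sum>k\<in>UNIV. P $ i $ k * x $ k - P $ j $ k * x $ k)"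
    by (simp add: matrix_vector_mult_def sum_subtractf)
  also have "\<dots> = (\<Sum>k\<in>UNIV. (P $ i $ k - m k) * x $ k - (P $ j $ k - m k) * x $ k)"
    by (intro sum.cong) (auto simp: algebra_simps)
  also have "\<dots> = (\<Sum>k\<in>UNIV. (P $ i $ k - m k) * x $ k) - (\<Sum>k\<in>UNIV. (P $ j $ k - m k) * x $ k)"
    by (simp add: sum_subtractf)
  also have "\<dots> \<le> (\<Sum>k\<in>UNIV. (P $ i $ k - m k) * hi) - (\<Sum>k\<in>UNIV. (P $ j $ k - m k) * lo)"
  proof -
    have "(\<Sum>k\<in>UNIV. (P $ i $ k - m k) * x $ k) \<le> (\<Sum>k\<in>UNIV. (P $ i $ k - m k) * hi)"
      using assms(2) by (intro sum_mono mult_left_mono) (auto simp: m_def)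
    moreover have "(\<Sum>k\<in>UNIV. (P $ j $ k - m k) * lo) \<le> (\<Sum>k\<in>UNIV. (P $ j $ k - m k) * x $ k)"
      using assms(2) by (intro sum_mono mult_left_mono) (auto simp: m_def)
    ultimately show ?thesis by linarith
  qed
  also have "\<dots> = (1 - (\<Sum>k\<in>UNIV. m k)) * hi - (1 - (\<Sum>k\<in>UNIV. m k)) * lo"
    by (simp add: sum_distrib_right[symmetric] sum_subtractf si sj)
  also have "\<dots> = (1 - (\<Sum>k\<in>UNIV. min (P $ i $ k) (P $ j $ k))) * (hi - lo)"
    by (simp add: m_def algebra_simps)
  finally show ?thesis .
qed

lemma contract:
  fixes P :: "real^'n^'n"
  assumes "row_stochastic P" "\<forall>k. lo \<le> x $ k \<and> x $ k \<le> hi"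
  shows "\<bar>(P *v x) $ i - (P *v x) $ j\<bar> \<le> ergcoef P * (hi - lo)"
proof (cases "i = j")
  case True
  have "lo \<le> hi" using assms(2) by force
  then show ?thesis using True erg_nonneg[OF assms(1)] by simp
next
  case False
  have hl: "lo \<le> hi" using assms(2) by force
  have e1: "1 - (\<Sum>k\<in>UNIV. min (P $ i $ k) (P $ j $ k)) \<le> ergcoef P" using erg_ge[OF False] .
  have e2: "1 - (\<Sum>k\<in>UNIV. min (P $ j $ k) (P $ i $ k)) \<le> ergcoef P" using erg_ge False by metis
  have c1: "(P *v x) $ i - (P *v x) $ j \<le> ergcoef P * (hi - lo)"
    using contract_key[OF assms, of i j] e1 hl
    by (meson mult_right_mono order_trans diff_ge_0_iff_ge)
  have c2: "(P *v x) $ j - (P *v x) $ i \<le> ergcoef P * (hi - lo)"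
    using contract_key[OF assms, of j i] e2 hl
    by (meson mult_right_mono order_trans diff_ge_0_iff_ge)
  show ?thesis using c1 c2 by linarith
qed


lemma dis_upper:
  fixes y :: "real^'n"
  assumes "\<forall>i j. \<bar>y $ i - y $ j\<bar> \<le> c"
  shows "disagreement y \<le> real CARD('n) * c\<^sup>2"
proof -
  have N: "real CARD('n) > 0" by simp
  have c0: "0 \<le> c" using assms by force
  have t: "(y $ j - (\<Sum>i\<in>UNIV. y $ i) / real CARD('n))\<^sup>2 \<le> c\<^sup>2" for j
  proof -
    have "y $ j - (\<Sum>i\<in>UNIV. y $ i) / real CARD('n) = (\<Sum>i\<in>UNIV. y $ j - y $ i) / real CARD('n)"
      using N by (simp add: sum_subtractf field_simps)
    moreover have "\<bar>\<Sum>i\<in>UNIV. y $ j - y $ i\<bar> \<le> real CARD('n) * c"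
    proof -
      have "\<bar>\<Sum>i\<in>UNIV. y $ j - y $ i\<bar> \<le> (\<Sum>i\<in>UNIV. \<bar>y $ j - y $ i\<bar>)" by (rule sum_abs)
      also have "\<dots> \<le> (\<Sum>i\<in>(UNIV::'n set). c)" by (rule sum_mono) (use assms in auto)
      finally show ?thesis by simp
    qed
    ultimately have "\<bar>y $ j - (\<Sum>i\<in>UNIV. y $ i) / real CARD('n)\<bar> \<le> c"
      using N by (simp add: divide_le_eq mult.commute)
    then have "\<bar>y $ j - (\<Sum>i\<in>UNIV. y $ i) / real CARD('n)\<bar> \<le> \<bar>c\<bar>" using c0 by simp
    then show ?thesis by (simp only: abs_le_square_iff)
  qed
  have "disagreement y \<le> (\<Sum>j\<in>(UNIV::'n set). c\<^sup>2)" unfolding disagreement_def by (intro sum_mono t)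
  then show ?thesis by simp
qed

lemma dis_lower:
  fixes y :: "real^'n"
  assumes "i \<noteq> j"
  shows "(y $ i - y $ j)\<^sup>2 / 2 \<le> disagreement y"
proof -
  define m where "m = (\<Sum>i\<in>UNIV. y $ i) / real CARD('n)"
  have "(\<Sum>k\<in>{i,j}. (y $ k - m)\<^sup>2) \<le> (\<Sum>k\<in>UNIV. (y $ k - m)\<^sup>2)"
    by (intro sum_mono2) auto
  moreover have "(\<Sum>k\<in>{i,j}. (y $ k - m)\<^sup>2) = (y $ i - m)\<^sup>2 + (y $ j - m)\<^sup>2" using assms by simp
  moreover have "(y $ i - y $ j)\<^sup>2 / 2 \<le> (y $ i - m)\<^sup>2 + (y $ j - m)\<^sup>2"
  proof -
    have "(y $ i - m)\<^sup>2 + (y $ j - m)\<^sup>2 - (y $ i - y $ j)\<^sup>2 / 2 = (y $ i + y $ j - 2 * m)\<^sup>2 / 2"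
      by (simp add: power2_eq_square field_simps)
    moreover have "0 \<le> (y $ i + y $ j - 2 * m)\<^sup>2 / 2" by simp
    ultimately show ?thesis by linarith
  qed
  ultimately show ?thesis unfolding disagreement_def m_def by linarith
qed

lemma select:
  fixes P :: "real^'n^'n"
  assumes "row_stochastic P" "CARD('n) \<noteq> 1" "ergcoef P \<ge> \<epsilon>" "\<epsilon> > 0"
  shows "\<exists>S. disagreement (P *v (\<chi> k. if k \<in> S then 1 else 0)) \<ge> \<epsilon>\<^sup>2 / 2"
proof -
  define T where "T = {(\<Sum>k\<in>UNIV. min (P $ i $ k) (P $ j $ k)) | i j :: 'n. i \<noteq> j}"
  obtain i0 j0 :: 'n where "i0 \<noteq> j0" using two_elems assms(2) by blast
  then have "(\<Sum>k\<in>UNIV. min (P $ i0 $ k) (P $ j0 $ k)) \<in> T" unfolding T_def by auto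
  then have "T \<noteq> {}" by auto
  moreover have "finite T" unfolding T_def by (rule erg_finite)
  ultimately have "Min T \<in> T" by (rule Min_in[rotated])
  then obtain i j where ij: "i \<noteq> j" and mi: "Min T = (\<Sum>k\<in>UNIV. min (P $ i $ k) (P $ j $ k))"
    unfolding T_def by blast
  have erg: "ergcoef P = 1 - (\<Sum>k\<in>UNIV. min (P $ i $ k) (P $ j $ k))"
    using assms(2) mi unfolding ergcoef_def T_def by simp
  define S where "S = {k. P $ j $ k < P $ i $ k}"
  define x :: "real^'n" where "x = (\<chi> k. if k \<in> S then 1 else 0)"
  have si: "(\<Sum>k\<in>UNIV. P $ i $ k) = 1" using assms(1) by (simp add: row_stochastic_def)
  have "(P *v x) $ i - (P *v x) $ j = (\<Sum>k\<in>UNIV. (P $ i $ k - P $ j $ k) * x $ k)"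
    by (simp add: matrix_vector_mult_def sum_subtractf algebra_simps)
  also have "\<dots> = (\<Sum>k\<in>UNIV. P $ i $ k - min (P $ i $ k) (P $ j $ k))"
    by (intro sum.cong) (auto simp: x_def S_def min_def)
  also have "\<dots> = ergcoef P" using erg si by (simp add: sum_subtractf)
  finally have d: "(P *v x) $ i - (P *v x) $ j \<ge> \<epsilon>" using assms(3) by simp
  then have "\<epsilon>\<^sup>2 \<le> ((P *v x) $ i - (P *v x) $ j)\<^sup>2" using assms(4) by (intro power_mono) auto
  then have "\<epsilon>\<^sup>2 / 2 \<le> disagreement (P *v x)" using dis_lower[OF ij, of "P *v x"] by linarith
  then show ?thesis unfolding x_def by blast
qed


theorem lemma2:
  fixes M :: "'a measure" and A :: "real^'n^'n" and \<sigma> :: "nat \<Rightarrow> 'a \<Rightarrow> 'n set"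
  assumes "prob_space M"
    and "row_stochastic A"
    and "\<And>k. k \<ge> 1 \<Longrightarrow> \<sigma> k \<in> measurable M (count_space UNIV)"
  shows "reaches_consensus M A \<sigma> \<longleftrightarrow>
         (\<forall>\<epsilon>>0. (\<lambda>k. measure M {w \<in> space M. ergcoef (prodA A \<sigma> k w) \<ge> \<epsilon>}) \<longlonglongrightarrow> 0)"
proof -
  interpret prob_space M by (rule assms(1))
  have rs: "\<And>k w. row_stochastic (prodA A \<sigma> k w)" using rs_prodA[OF assms(2)] .
  have sets: "{w \<in> space M. \<Phi> (prodA A \<sigma> k w)} \<in> sets M" for \<Phi> k
    by (rule sets_prodA[where \<sigma>=\<sigma>]) (rule assms(3))
  have trajset: "{w \<in> space M. disagreement (traj A \<sigma> x1 (Suc k) w) \<ge> e} =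
      {w \<in> space M. disagreement (prodA A \<sigma> k w *v x1) \<ge> e}" for x1 k e
    by (simp add: traj_prodA)
  show ?thesis
  proof
    assume rc: "reaches_consensus M A \<sigma>"
    show "\<forall>\<epsilon>>0. (\<lambda>k. measure M {w \<in> space M. ergcoef (prodA A \<sigma> k w) \<ge> \<epsilon>}) \<longlonglongrightarrow> 0"
    proof (intro allI impI)
      fix \<epsilon> :: real assume ep: "\<epsilon> > 0"
      define xS :: "'n set \<Rightarrow> real^'n" where "xS S = (\<chi> k. if k \<in> S then 1 else 0)" for S
      define F where "F S k = {w \<in> space M. disagreement (prodA A \<sigma> k w *v xS S) \<ge> \<epsilon>\<^sup>2 / 2}" for S k
      have e2: "\<epsilon>\<^sup>2 / 2 > 0" using ep by simp
      have FS: "(\<lambda>k. measure M (F S k)) \<longlonglongrightarrow> 0" for S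
      proof -
        have "(\<lambda>k. measure M {w \<in> space M. disagreement (traj A \<sigma> (xS S) k w) \<ge> \<epsilon>\<^sup>2 / 2}) \<longlonglongrightarrow> 0"
          using rc e2 unfolding reaches_consensus_def by blast
        then have "(\<lambda>k. measure M {w \<in> space M. disagreement (traj A \<sigma> (xS S) (Suc k) w) \<ge> \<epsilon>\<^sup>2 / 2}) \<longlonglongrightarrow> 0"
          by (rule LIMSEQ_Suc)
        then show ?thesis unfolding F_def trajset .
      qed
      have sum0: "(\<lambda>k. \<Sum>S\<in>UNIV. measure M (F S k)) \<longlonglongrightarrow> 0"
        using tendsto_sum[of UNIV "\<lambda>S k. measure M (F S k)" "\<lambda>S. 0" sequentially] FS by simp
      have le: "measure M {w \<in> space M. ergcoef (prodA A \<sigma> k w) \<ge> \<epsilon>} \<le> (\<Sum>S\<in>UNIV. measure M (F S k))" for k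
      proof -
        have sub: "{w \<in> space M. ergcoef (prodA A \<sigma> k w) \<ge> \<epsilon>} \<subseteq> (\<Union>S. F S k)"
        proof
          fix w assume w: "w \<in> {w \<in> space M. ergcoef (prodA A \<sigma> k w) \<ge> \<epsilon>}"
          have "CARD('n) \<noteq> 1"
          proof
            assume "CARD('n) = 1"
            then have "ergcoef (prodA A \<sigma> k w) = 0" by (simp add: ergcoef_def)
            then show False using w ep by simp
          qed
          then obtain S where "disagreement (prodA A \<sigma> k w *v xS S) \<ge> \<epsilon>\<^sup>2 / 2"
            using select[OF rs _ _ ep, of k w] w unfolding xS_def by auto
          then show "w \<in> (\<Union>S. F S k)" using w unfolding F_def by auto
        qed
        have "measure M {w \<in> space M. ergcoef (prodA A \<sigma> k w) \<ge> \<epsilon>} \<le> measure M (\<Union>S. F S k)"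
          using sub by (intro finite_measure_mono) (auto simp: F_def intro!: sets.finite_UN sets)
        also have "\<dots> \<le> (\<Sum>S\<in>UNIV. measure M (F S k))"
          by (rule measure_UNION_le) (auto simp: F_def intro: sets)
        finally show ?thesis .
      qed
      show "(\<lambda>k. measure M {w \<in> space M. ergcoef (prodA A \<sigma> k w) \<ge> \<epsilon>}) \<longlonglongrightarrow> 0"
        by (rule tendsto_sandwich[OF _ _ tendsto_const sum0]) (auto intro!: always_eventually le)
    qed
  next
    assume H: "\<forall>\<epsilon>>0. (\<lambda>k. measure M {w \<in> space M. ergcoef (prodA A \<sigma> k w) \<ge> \<epsilon>}) \<longlonglongrightarrow> 0"
    show "reaches_consensus M A \<sigma>"
      unfolding reaches_consensus_def
    proof (intro allI impI)
      fix \<epsilon> :: real and x1 :: "real^'n" assume ep: "\<epsilon> > 0"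
      define B where "B = (\<Sum>k\<in>UNIV. \<bar>x1 $ k\<bar>)"
      have B0: "0 \<le> B" unfolding B_def by (simp add: sum_nonneg)
      have xb: "\<forall>k. - B \<le> x1 $ k \<and> x1 $ k \<le> B"
      proof
        fix k
        have "\<bar>x1 $ k\<bar> \<le> B" unfolding B_def
          by (rule member_le_sum[of k UNIV "\<lambda>k. \<bar>x1 $ k\<bar>"]) auto
        then show "- B \<le> x1 $ k \<and> x1 $ k \<le> B" by linarith
      qed
      define N where "N = real CARD('n)"
      have N0: "N > 0" unfolding N_def by simp
      define \<delta> where "\<delta> = sqrt (\<epsilon> / (8 * N * (B + 1)\<^sup>2))"
      have dpos: "\<delta> > 0" unfolding \<delta>_def using ep N0 B0 by simp
      have d2: "\<delta>\<^sup>2 = \<epsilon> / (8 * N * (B + 1)\<^sup>2)" unfolding \<delta>_def using ep N0 B0 by simp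
      have key: "N * (\<delta> * (2 * B))\<^sup>2 < \<epsilon>"
      proof -
        have "N * (\<delta> * (2 * B))\<^sup>2 = \<epsilon> * B\<^sup>2 / (2 * (B + 1)\<^sup>2)"
          using N0 B0 by (simp add: power_mult_distrib d2 field_simps)
        also have "\<dots> \<le> \<epsilon> / 2"
        proof -
          have "B\<^sup>2 \<le> (B + 1)\<^sup>2" using B0 by (intro power_mono) auto
          then have "B\<^sup>2 / (B + 1)\<^sup>2 \<le> 1" using B0 by simp
          then have "\<epsilon> * (B\<^sup>2 / (B + 1)\<^sup>2) \<le> \<epsilon>" using ep by (metis mult_left_le less_imp_le times_divide_eq_right)
          then show ?thesis by (simp add: field_simps)
        qed
        also have "\<dots> < \<epsilon>" using ep by simp
        finally show ?thesis .
      qed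
      have incl: "{w \<in> space M. disagreement (prodA A \<sigma> k w *v x1) \<ge> \<epsilon>}
          \<subseteq> {w \<in> space M. ergcoef (prodA A \<sigma> k w) \<ge> \<delta>}" for k
      proof (rule subsetI, rule ccontr)
        fix w assume w: "w \<in> {w \<in> space M. disagreement (prodA A \<sigma> k w *v x1) \<ge> \<epsilon>}"
          and nw: "w \<notin> {w \<in> space M. ergcoef (prodA A \<sigma> k w) \<ge> \<delta>}"
        let ?P = "prodA A \<sigma> k w"
        have lt: "ergcoef ?P < \<delta>" using w nw by auto
        have en: "0 \<le> ergcoef ?P" by (rule erg_nonneg[OF rs])
        have "\<forall>i j. \<bar>(?P *v x1) $ i - (?P *v x1) $ j\<bar> \<le> \<delta> * (2 * B)"
        proof (intro allI)
          fix i j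
          have "\<bar>(?P *v x1) $ i - (?P *v x1) $ j\<bar> \<le> ergcoef ?P * (B - - B)"
            by (rule contract[OF rs xb])
          also have "\<dots> = ergcoef ?P * (2 * B)" by simp
          also have "\<dots> \<le> \<delta> * (2 * B)" using lt B0 by (intro mult_right_mono) auto
          finally show "\<bar>(?P *v x1) $ i - (?P *v x1) $ j\<bar> \<le> \<delta> * (2 * B)" .
        qed
        then have "disagreement (?P *v x1) \<le> N * (\<delta> * (2 * B))\<^sup>2"
          unfolding N_def by (rule dis_upper)
        then show False using key w by auto
      qed
      have le: "measure M {w \<in> space M. disagreement (traj A \<sigma> x1 (Suc k) w) \<ge> \<epsilon>}
          \<le> measure M {w \<in> space M. ergcoef (prodA A \<sigma> k w) \<ge> \<delta>}" for k
        unfolding trajset by (intro finite_measure_mono[OF incl sets])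
      have "(\<lambda>k. measure M {w \<in> space M. disagreement (traj A \<sigma> x1 (Suc k) w) \<ge> \<epsilon>}) \<longlonglongrightarrow> 0"
        by (rule tendsto_sandwich[OF _ _ tendsto_const H[rule_format, OF dpos]]) (auto intro!: always_eventually le)
      then show "(\<lambda>k. measure M {w \<in> space M. disagreement (traj A \<sigma> x1 k w) \<ge> \<epsilon>}) \<longlonglongrightarrow> 0"
        by (rule LIMSEQ_imp_Suc)
    qed
  qed
qed

end
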